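(* For all $n,k\ge 0$, in $\mathbb{Z}[q]$, $$e(n,k)+o(n,k)\,q\equiv q^{\binom{k+1}{2}}\begin{bmatrix} n\\ k\end{bmatrix}_q \pmod{q^2-1},\qquad L(n,k)+\bar L(n,k)\,q\equiv \begin{bmatrix} n\\ k\end{bmatrix}_q\pmod{q^2-1}.$$
   Context: $e(n,k)$ (resp. $o(n,k)$) is the number of $k$-element subsets of $\{1,\dots,n\}$ with even (resp. odd) sum of elements, the empty set counting as even. $\begin{bmatrix} n\\ k\end{bmatrix}_q=\prod_{i=1}^{k}\frac{1-q^{n-k+i}}{1-q^i}$ is the Gaussian ($q$-)binomial coefficient (a polynomial in $q$, zero for $k>n$). Losanitsch's triangle $(L(n,k))$ is defined by $L(0,k)=[k=0]$, $L(1,k)=[k\le 1]$ for $k\ge0$, $L(n,k)=0$ for $k<0$, and for $n\ge 2$: $L(n,k)=L(n-2,k)+\binom{n-2}{k-1}+L(n-2,k-2)$ (with $\binom{m}{j}=0$ for $j<0$ or $j>m$). $\bar L(n,k)=\binom{n}{k}-L(n,k)$. *)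

theory Defs
  imports "HOL-Computational_Algebra.Polynomial"
begin

definition even_subsets :: "nat \<Rightarrow> nat \<Rightarrow> nat" where
  "even_subsets n k = card {S. S \<subseteq> {1..n} \<and> card S = k \<and> even (\<Sum>S)}"

definition odd_subsets :: "nat \<Rightarrow> nat \<Rightarrow> nat" where
  "odd_subsets n k = card {S. S \<subseteq> {1..n} \<and> card S = k \<and> odd (\<Sum>S)}"

text \<open>Gaussian binomial coefficient as a polynomial in q over the integers,
  via the product formula (the division is exact); zero for k > n.\<close>
definition qbinom :: "nat \<Rightarrow> nat \<Rightarrow> int poly" where
  "qbinom n k = (if k \<le> n then
      (\<Prod>i\<in>{1..k}. 1 - [:0,1:] ^ (n - k + i)) div (\<Prod>i\<in>{1..k}. 1 - [:0,1:] ^ i)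
    else 0)"

definition binomz :: "nat \<Rightarrow> int \<Rightarrow> int" where
  "binomz m j = (if 0 \<le> j \<and> j \<le> int m then int (m choose nat j) else 0)"

fun losanitsch :: "nat \<Rightarrow> int \<Rightarrow> int" where
  "losanitsch 0 k = (if k = 0 then 1 else 0)"
| "losanitsch (Suc 0) k = (if 0 \<le> k \<and> k \<le> 1 then 1 else 0)"
| "losanitsch (Suc (Suc n)) k =
     (if k < 0 then 0 else losanitsch n k + binomz n (k - 1) + losanitsch n (k - 2))"

definition losanitsch_bar :: "nat \<Rightarrow> int \<Rightarrow> int" where
  "losanitsch_bar n k = binomz n k - losanitsch n k"

end

theory Submission
  imports Defs
begin

fun G :: "nat \<Rightarrow> nat \<Rightarrow> int poly" where
  "G n 0 = 1"
| "G 0 (Suc k) = 0"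
| "G (Suc n) (Suc k) = G n k + [:0,1:] ^ (Suc k) * G n (Suc k)"

lemma G_zero: "n < k \<Longrightarrow> G n k = 0"
proof (induction n arbitrary: k)
  case 0 then show ?case by (cases k) auto
next
  case (Suc n) then show ?case by (cases k) auto
qed

lemma alg: "(a::'a::comm_ring_1) * (1 - x) + x * (a * (1 - y)) = a * ((1 - x) + x * (1 - y))"
  by (simp add: algebra_simps)

lemma G_prod: "k \<le> n \<Longrightarrow>
  G n k * (\<Prod>i\<in>{1..k}. 1 - [:0,1:] ^ i) = (\<Prod>i<k. 1 - [:0,1:] ^ (n - i))"
proof (induction n arbitrary: k)
  case 0 then show ?case by simp
next
  case (Suc n)
  show ?case
  proof (cases k)
    case 0 then show ?thesis by simp
  next
    case (Suc j)
    have A: "(\<Prod>i<Suc j. (1::int poly) - [:0,1:] ^ (Suc n - i)) = (1 - [:0,1:]^(Suc n)) * (\<Prod>i<j. 1 - [:0,1:] ^ (n - i))"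
      apply (simp only: prod.lessThan_Suc_shift) apply simp done
    have D: "(\<Prod>i\<in>{1..Suc j}. (1::int poly) - [:0,1:] ^ i) = (\<Prod>i\<in>{1..j}. 1 - [:0,1:] ^ i) * (1 - [:0,1:]^Suc j)"
      by simp
    show ?thesis
    proof (cases "j = n")
      case True
      have Z: "G n (Suc j) = 0" using True by (simp add: G_zero)
      have IH1: "G n j * (\<Prod>i\<in>{1..j}. 1 - [:0,1:] ^ i) = (\<Prod>i<j. 1 - [:0,1:] ^ (n - i))"
        using Suc.IH[of j] True by simp
      have "G (Suc n) (Suc j) * (\<Prod>i\<in>{1..Suc j}. 1 - [:0,1:] ^ i)
          = G n j * (\<Prod>i\<in>{1..j}. 1 - [:0,1:] ^ i) * (1 - [:0,1:]^Suc j)"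
        by (simp only: G.simps D Z mult_zero_right add_0_right mult_zero_left distrib_right mult.assoc)
      also have "\<dots> = (\<Prod>i<j. 1 - [:0,1:] ^ (n - i)) * (1 - [:0,1:]^Suc n)"
        by (subst IH1) (simp only: True)
      also have "\<dots> = (\<Prod>i<Suc j. 1 - [:0,1:] ^ (Suc n - i))"
        by (simp only: A mult.commute)
      finally show ?thesis using \<open>k = Suc j\<close> by simp
    next
      case False
      then have jn: "Suc j \<le> n" using Suc.prems \<open>k = Suc j\<close> by simp
      have B: "(\<Prod>i<Suc j. (1::int poly) - [:0,1:] ^ (n - i)) = (\<Prod>i<j. 1 - [:0,1:] ^ (n - i)) * (1 - [:0,1:]^(n-j))"
        by simp
      have IH1: "G n j * (\<Prod>i\<in>{1..j}. 1 - [:0,1:] ^ i) = (\<Prod>i<j. 1 - [:0,1:] ^ (n - i))"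
        using Suc.IH[of j] jn by simp
      have IH2: "G n (Suc j) * (\<Prod>i\<in>{1..Suc j}. 1 - [:0,1:] ^ i) = (\<Prod>i<Suc j. 1 - [:0,1:] ^ (n - i))"
        using Suc.IH[of "Suc j"] jn by simp
      have E: "(1::int poly) - [:0,1:]^Suc j + [:0,1:]^Suc j * (1 - [:0,1:]^(n-j)) = 1 - [:0,1:]^Suc n"
      proof -
        have "[:0,1:]^Suc j * [:0,1:]^(n-j) = ([:0,1:]^Suc n :: int poly)"
          using jn by (simp add: power_add[symmetric])
        then show ?thesis by (simp add: algebra_simps)
      qed
      have "G (Suc n) (Suc j) * (\<Prod>i\<in>{1..Suc j}. 1 - [:0,1:] ^ i)
          = G n j * (\<Prod>i\<in>{1..j}. 1 - [:0,1:] ^ i) * (1 - [:0,1:]^Suc j)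
            + [:0,1:]^Suc j * (G n (Suc j) * (\<Prod>i\<in>{1..Suc j}. 1 - [:0,1:] ^ i))"
        by (simp only: G.simps D) (simp add: algebra_simps)
      also have "\<dots> = (\<Prod>i<j. 1 - [:0,1:] ^ (n - i)) * (1 - [:0,1:]^Suc j) + [:0,1:]^Suc j * ((\<Prod>i<j. 1 - [:0,1:] ^ (n - i)) * (1 - [:0,1:]^(n-j)))"
        by (simp only: IH1 IH2 B)
      also have "\<dots> = (\<Prod>i<j. 1 - [:0,1:] ^ (n - i)) * ((1 - [:0,1:]^Suc j) + [:0,1:]^Suc j * (1 - [:0,1:]^(n-j)))"
        by (rule alg)
      also have "\<dots> = (\<Prod>i<Suc j. 1 - [:0,1:] ^ (Suc n - i))"
        by (simp only: E A mult.commute)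
      finally show ?thesis using \<open>k = Suc j\<close> by simp
    qed
  qed
qed

lemma reidx: "k \<le> (n::nat) \<Longrightarrow> (\<Prod>i\<in>{1..k}. f (n - k + i)) = (\<Prod>i<k. (f (n - i) :: 'a::comm_monoid_mult))"
  apply (rule prod.reindex_bij_witness[where i="\<lambda>j. k - j" and j="\<lambda>i. k - i"])
  apply auto
  done

lemma D_nz: "(\<Prod>i\<in>{1..k}. 1 - [:0,1:] ^ i) \<noteq> (0::int poly)"
proof -
  have "1 - [:0,1:] ^ i \<noteq> (0::int poly)" if "i \<in> {1..k}" for i
  proof
    assume "1 - [:0,1:] ^ i = (0::int poly)"
    then have "poly (1 - [:0,1:] ^ i) 0 = (0::int)" by simp
    then show False using that by (simp add: power_0_left)
  qed
  then show ?thesis by (simp add: prod_zero_iff)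
qed

lemma qbinom_G: "qbinom n k = G n k"
proof (cases "k \<le> n")
  case True
  then show ?thesis unfolding qbinom_def
    using G_prod[OF True] reidx[OF True, of "\<lambda>m. 1 - [:0,1:]^m"] D_nz[of k]
    by (metis nonzero_mult_div_cancel_right)
next
  case False then show ?thesis by (simp add: qbinom_def G_zero)
qed

lemma dvd_crit:
  fixes p :: "int poly"
  assumes "poly p 1 = 0" "poly p (-1) = 0"
  shows "([:0,1:] ^ 2 - 1) dvd p"
proof -
  from assms(1) obtain r where r: "p = [:-1,1:] * r" using poly_eq_0_iff_dvd[of p 1] by auto
  then have "poly r (-1) = 0" using assms(2) by simp
  then obtain s where s: "r = [:1,1:] * s" using poly_eq_0_iff_dvd[of r "-1"] by auto
  have "([:0,1:] ^ 2 - 1 :: int poly) = [:-1,1:] * [:1,1:]"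
    by (simp add: power2_eq_square one_pCons)
  then show ?thesis using r s by (metis dvd_triv_left mult.assoc)
qed

lemma G_one: "poly (G n k) 1 = int (n choose k)"
  by (induction n k rule: G.induct) auto

definition g :: "nat \<Rightarrow> nat \<Rightarrow> int" where "g n k = poly (G n k) (-1)"

lemma g0: "g n 0 = 1" by (simp add: g_def)
lemma g_0Suc: "g 0 (Suc k) = 0" by (simp add: g_def)
lemma g_SS: "g (Suc n) (Suc k) = g n k + (-1)^Suc k * g n (Suc k)"
  by (simp add: g_def)
lemma g_big: "n < k \<Longrightarrow> g n k = 0" by (simp add: g_def G_zero)

lemma g_step2: "g (Suc (Suc n)) (Suc (Suc k)) = g n k + g n (Suc (Suc k))"
  by (simp add: g_SS algebra_simps)

lemma g_step1: "g (Suc (Suc n)) 1 = g n 1"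
  using g_SS[of "Suc n" 0] g_SS[of n 0] by (simp add: g0)

lemma L_neg: "k < 0 \<Longrightarrow> losanitsch n k = 0"
  by (induction n k rule: losanitsch.induct) auto

lemma losan: "2 * losanitsch n (int k) - int (n choose k) = g n k"
proof (induction n arbitrary: k rule: less_induct)
  case (less n)
  show ?case
  proof (cases n)
    case 0 then show ?thesis by (cases k) (auto simp: g0 g_0Suc)
  next
    case (Suc m)
    show ?thesis
    proof (cases m)
      case 0
      then show ?thesis using \<open>n = Suc m\<close>
        by (cases k) (auto simp: g0 g_SS g_0Suc g_big)
    next
      case (Suc m')
      have n: "n = Suc (Suc m')" using \<open>n = Suc m\<close> Suc by simp
      have IH: "\<And>k. 2 * losanitsch m' (int k) - int (m' choose k) = g m' k"
        using less n by simp
      show ?thesis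
      proof (cases k)
        case 0
        then show ?thesis using IH[of 0] n by (simp add: g0 L_neg binomz_def)
      next
        case (Suc j)
        show ?thesis
        proof (cases j)
          case 0
          have "losanitsch n (int k) = losanitsch m' 1 + 1"
            using n Suc 0 by (simp add: L_neg binomz_def)
          then show ?thesis using IH[of 1] n Suc 0 g_step1[of m'] by simp
        next
          case (Suc i)
          have "losanitsch n (int k) = losanitsch m' (int (Suc (Suc i))) + int (m' choose Suc i) + losanitsch m' (int i)"
            using n \<open>k = Suc j\<close> Suc by (simp add: binomz_def nat_add_distrib)
          moreover have "int (n choose k) = int (m' choose Suc (Suc i)) + 2 * int (m' choose Suc i) + int (m' choose i)"
            using n \<open>k = Suc j\<close> Suc by simp
          ultimately show ?thesis using IH[of i] IH[of "Suc (Suc i)"] g_step2[of m' i] n \<open>k = Suc j\<close> Suc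
            by simp
        qed
      qed
    qed
  qed
qed

definition Sk :: "nat \<Rightarrow> nat \<Rightarrow> nat set set" where
  "Sk n k = {S. S \<subseteq> {1..n} \<and> card S = k}"

definition Ef :: "nat \<Rightarrow> nat \<Rightarrow> int" where
  "Ef n k = (\<Sum>S\<in>Sk n k. (-1) ^ (\<Sum>S))"

lemma Sk_fin: "finite (Sk n k)"
  unfolding Sk_def by (rule finite_subset[of _ "Pow {1..n}"]) auto

lemma Sk_0: "Sk n 0 = {{}}"
  unfolding Sk_def by (auto dest: finite_subset)

lemma Sk_0Suc: "Sk 0 (Suc k) = {}"
  unfolding Sk_def by auto

lemma Sk_SS: "Sk (Suc n) (Suc k) = Sk n (Suc k) \<union> insert (Suc n) ` Sk n k"
proof (intro equalityI subsetI)
  fix S assume S: "S \<in> Sk (Suc n) (Suc k)"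
  then have fS: "finite S" unfolding Sk_def using finite_subset by blast
  show "S \<in> Sk n (Suc k) \<union> insert (Suc n) ` Sk n k"
  proof (cases "Suc n \<in> S")
    case True
    have "S - {Suc n} \<in> Sk n k" using S True fS unfolding Sk_def by auto
    moreover have "S = insert (Suc n) (S - {Suc n})" using True by auto
    ultimately show ?thesis by blast
  next
    case False
    then have "S \<in> Sk n (Suc k)" using S unfolding Sk_def by (auto simp: subset_iff le_Suc_eq)
    then show ?thesis by blast
  qed
next
  fix S assume "S \<in> Sk n (Suc k) \<union> insert (Suc n) ` Sk n k"
  then show "S \<in> Sk (Suc n) (Suc k)"
  proof
    assume "S \<in> Sk n (Suc k)" then show ?thesis unfolding Sk_def by auto
  next
    assume "S \<in> insert (Suc n) ` Sk n k"
    then obtain T where T: "T \<in> Sk n k" "S = insert (Suc n) T" by blast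
    then have "finite T" "Suc n \<notin> T" unfolding Sk_def using finite_subset by auto
    then show ?thesis using T unfolding Sk_def by auto
  qed
qed

lemma Ef_0: "Ef n 0 = 1" by (simp add: Ef_def Sk_0)
lemma Ef_0Suc: "Ef 0 (Suc k) = 0" by (simp add: Ef_def Sk_0Suc)

lemma Ef_SS: "Ef (Suc n) (Suc k) = Ef n (Suc k) + (-1) ^ Suc n * Ef n k"
proof -
  have notin: "Suc n \<notin> T" "finite T" if "T \<in> Sk n k" for T
    using that unfolding Sk_def using finite_subset by auto
  have disj: "Sk n (Suc k) \<inter> insert (Suc n) ` Sk n k = {}"
    unfolding Sk_def by auto
  have inj: "inj_on (insert (Suc n)) (Sk n k)"
    unfolding inj_on_def using notin by (metis insert_ident)
  have "Ef (Suc n) (Suc k) = Ef n (Suc k) + (\<Sum>S\<in>insert (Suc n) ` Sk n k. (-1) ^ (\<Sum>S))"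
    unfolding Ef_def Sk_SS by (rule sum.union_disjoint) (auto simp: Sk_fin disj)
  also have "(\<Sum>S\<in>insert (Suc n) ` Sk n k. (-1::int) ^ (\<Sum>S)) = (\<Sum>T\<in>Sk n k. (-1) ^ (\<Sum>(insert (Suc n) T)))"
    by (rule sum.reindex[OF inj, unfolded comp_def])
  also have "\<dots> = (\<Sum>T\<in>Sk n k. (-1) ^ Suc n * (-1) ^ (\<Sum>T))"
    by (rule sum.cong) (auto simp: notin power_add)
  also have "\<dots> = (-1) ^ Suc n * Ef n k" by (simp add: Ef_def sum_distrib_left)
  finally show ?thesis .
qed

lemma Ef_step2: "Ef (Suc (Suc n)) (Suc (Suc k)) = Ef n (Suc (Suc k)) - Ef n k"
  by (simp add: Ef_SS algebra_simps)

lemma Ef_step1: "Ef (Suc (Suc n)) 1 = Ef n 1"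
  using Ef_SS[of "Suc n" 0] Ef_SS[of n 0] by (simp add: Ef_0)

lemma choose2: "(Suc (Suc (Suc k)) choose 2) = (Suc k choose 2) + 2 * k + 3"
proof -
  have "Suc (Suc (Suc k)) choose Suc (Suc 0) = (Suc k choose Suc (Suc 0)) + 2*k+3" by simp
  then show ?thesis by (simp only: numeral_2_eq_2)
qed

lemma sgn2: "(-1::int) ^ (Suc (Suc (Suc k)) choose 2) = - ((-1) ^ (Suc k choose 2))"
  by (simp add: choose2 power_add power_mult)

lemma c1: "(Suc 0 choose 2) = 0" by (simp add: numeral_2_eq_2)
lemma c2: "(Suc (Suc 0) choose 2) = 1" by (simp add: numeral_2_eq_2)

lemma Ef_g: "Ef n k = (-1) ^ (Suc k choose 2) * g n k"
proof (induction n arbitrary: k rule: less_induct)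
  case (less n)
  show ?case
  proof (cases n)
    case 0 then show ?thesis by (cases k) (simp_all add: g0 g_0Suc Ef_0 Ef_0Suc c1)
  next
    case (Suc m)
    show ?thesis
    proof (cases m)
      case 0
      show ?thesis
      proof (cases k)
        case 0 then show ?thesis by (simp add: g0 Ef_0 c1)
      next
        case (Suc j)
        show ?thesis
        proof (cases j)
          case 0
          have "Ef 1 1 = -1" using Ef_SS[of 0 0] by (simp add: Ef_0 Ef_0Suc)
          moreover have "g 1 1 = 1" using g_SS[of 0 0] by (simp add: g0 g_0Suc)
          ultimately show ?thesis using \<open>n = Suc m\<close> \<open>m = 0\<close> \<open>k = Suc j\<close> 0 by (simp add: c2)
        next
          case (Suc i)
          have "Ef 1 (Suc (Suc i)) = 0" using Ef_SS[of 0 "Suc i"] by (simp add: Ef_0Suc)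
          moreover have "g 1 (Suc (Suc i)) = 0" by (simp add: g_big)
          ultimately show ?thesis using \<open>n = Suc m\<close> \<open>m = 0\<close> \<open>k = Suc j\<close> Suc by simp
        qed
      qed
    next
      case (Suc m')
      have n: "n = Suc (Suc m')" using \<open>n = Suc m\<close> Suc by simp
      have IH: "\<And>k. Ef m' k = (-1) ^ (Suc k choose 2) * g m' k"
        using less n by simp
      show ?thesis
      proof (cases k)
        case 0
        then show ?thesis using n by (simp add: g0 Ef_0 c1)
      next
        case (Suc j)
        show ?thesis
        proof (cases j)
          case 0
          then show ?thesis using IH[of 1] n Suc g_step1[of m'] Ef_step1[of m'] by simp
        next
          case (Suc i)
          define s where "s = (-1::int) ^ (Suc i choose 2)"
          have "Ef n k = Ef m' (Suc (Suc i)) - Ef m' i"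
            using Ef_step2[of m' i] n \<open>k = Suc j\<close> Suc by simp
          also have "\<dots> = - s * g m' (Suc (Suc i)) - s * g m' i"
            using IH[of i] IH[of "Suc (Suc i)"] sgn2[of i] unfolding s_def by simp
          also have "\<dots> = - s * g n k"
            using g_step2[of m' i] n \<open>k = Suc j\<close> Suc by (simp add: algebra_simps)
          also have "- s = (-1) ^ (Suc k choose 2)"
            using sgn2[of i] \<open>k = Suc j\<close> Suc unfolding s_def by simp
          finally show ?thesis .
        qed
      qed
    qed
  qed
qed

lemma eo_sum: "int (even_subsets n k) + int (odd_subsets n k) = int (n choose k)"
   and eo_diff: "int (even_subsets n k) - int (odd_subsets n k) = Ef n k"
proof -
  have e: "even_subsets n k = card (Sk n k \<inter> {S. even (\<Sum>S)})"
    unfolding even_subsets_def Sk_def by (rule arg_cong[where f=card]) auto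
  have o: "odd_subsets n k = card (Sk n k \<inter> - {S. even (\<Sum>S)})"
    unfolding odd_subsets_def Sk_def by (rule arg_cong[where f=card]) auto
  have fin: "finite (Sk n k \<inter> {S. even (\<Sum>S)})" "finite (Sk n k \<inter> - {S. even (\<Sum>S)})"
    using Sk_fin by auto
  have "int (card (Sk n k)) = (\<Sum>S\<in>Sk n k. (if even (\<Sum>S) then 1 else 1 :: int))" by simp
  also have "\<dots> = int (even_subsets n k) + int (odd_subsets n k)"
    by (subst sum.If_cases) (simp_all add: Sk_fin e o)
  finally show "int (even_subsets n k) + int (odd_subsets n k) = int (n choose k)"
    unfolding Sk_def using n_subsets[of "{1..n}" k] by simp
  have "Ef n k = (\<Sum>S\<in>Sk n k. (if even (\<Sum>S) then 1 else -1 :: int))"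
    unfolding Ef_def by (rule sum.cong) (auto simp: minus_one_power_iff)
  also have "\<dots> = int (even_subsets n k) - int (odd_subsets n k)"
    by (subst sum.If_cases) (simp_all add: Sk_fin e o)
  finally show "int (even_subsets n k) - int (odd_subsets n k) = Ef n k" by simp
qed

theorem theorem4p1:
  fixes n k :: nat
  shows "([:0,1:] ^ 2 - 1 :: int poly) dvd
           (of_nat (even_subsets n k) + of_nat (odd_subsets n k) * [:0,1:]
             - [:0,1:] ^ (Suc k choose 2) * qbinom n k)
       \<and> ([:0,1:] ^ 2 - 1 :: int poly) dvd
           (of_int (losanitsch n (int k)) + of_int (losanitsch_bar n (int k)) * [:0,1:]
             - qbinom n k)"
proof
  show "([:0,1:] ^ 2 - 1 :: int poly) dvd
           (of_nat (even_subsets n k) + of_nat (odd_subsets n k) * [:0,1:]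
             - [:0,1:] ^ (Suc k choose 2) * qbinom n k)"
  proof (rule dvd_crit)
    show "poly (of_nat (even_subsets n k) + of_nat (odd_subsets n k) * [:0,1:]
             - [:0,1:] ^ (Suc k choose 2) * qbinom n k) 1 = 0"
      using eo_sum[of n k] by (simp add: qbinom_G G_one of_nat_poly)
    show "poly (of_nat (even_subsets n k) + of_nat (odd_subsets n k) * [:0,1:]
             - [:0,1:] ^ (Suc k choose 2) * qbinom n k) (-1) = 0"
      using eo_diff[of n k] Ef_g[of n k] by (simp add: qbinom_G g_def of_nat_poly)
  qed
  show "([:0,1:] ^ 2 - 1 :: int poly) dvd
           (of_int (losanitsch n (int k)) + of_int (losanitsch_bar n (int k)) * [:0,1:]
             - qbinom n k)"
  proof (rule dvd_crit)
    show "poly (of_int (losanitsch n (int k)) + of_int (losanitsch_bar n (int k)) * [:0,1:]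
             - qbinom n k) 1 = 0"
      by (simp add: qbinom_G G_one of_int_poly losanitsch_bar_def binomz_def)
    show "poly (of_int (losanitsch n (int k)) + of_int (losanitsch_bar n (int k)) * [:0,1:]
             - qbinom n k) (-1) = 0"
      using losan[of n k] by (cases "k \<le> n") (simp_all add: qbinom_G g_def of_int_poly losanitsch_bar_def binomz_def not_le binomial_eq_0)
  qed
qed

end
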